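(* Let $(\Delta X)_X$ be a quasi-regular family and let $A$ be a $\Delta$-regular algebra with structure map $\beta:\mathrm{FT}\,A\to A$. Extend $\beta$ to $\Delta A$ by $$\beta(t)=\bigvee\{\beta(s)\;:\; s\ll t\}\qquad (t\in\Delta A)$$ (these suprema exist because the sets involved are $\Delta$-sets; on finite terms this agrees with the original $\beta$). Then $(A,\beta)$ with $\beta:\Delta A\to A$ is an Eilenberg–Moore algebra for the monad $(\Delta,\mu,\eta)$; that is, $\beta(\eta_A(a))=a$ for all $a\in A$, and $\beta\circ\mu_A=\beta\circ\Delta\beta$ as maps $\Delta(\Delta A)\to A$; equivalently, for every $t(s_i\mid i\in I)\in\Delta(\Delta A)$ with $s_i\in \Delta A$, $\beta(t(s_i\mid i\in I))=\beta(t(\beta(s_i)\mid i\in I))$, where on the left the term of terms is flattened into a term over $A$.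
   Context: Fix a ranked alphabet $\Sigma$. An ordered $\Sigma$-algebra is a $\Sigma$-algebra $A$ with a partial order $\le$ having a least element $\bot^A$ such that every operation is monotone. $\mathrm{FT}\,X$ denotes the finite partial $\Sigma$-terms over a set $X$ (finite trees with internal nodes labeled by symbols of $\Sigma$ of matching arity, leaves labeled by constants or elements of $X$, and possibly missing subterms, written $\bot$), and $\mathrm{CT}\,X$ the partial $\Sigma$-coterms (finite or infinite such trees), ordered by extension of partial trees; $\mathrm{CT}\,X$ is the free $\omega$-continuous algebra on $X$ (countable directed sups exist and operations preserve them; morphisms are strict monotone operation-preserving maps preserving countable directed sups). A quasi-regular family is a family $(\Delta X)_X$, indexed by all sets, with each $\Delta X$ an ordered $\Sigma$-subalgebra of $\mathrm{CT}\,X$ containing $X$, such that every morphism $h:\mathrm{CT}\,X\to\mathrm{CT}\,Y$ of $\omega$-continuous algebras with $h(X)\subseteq\Delta Y$ satisfies $h(\Delta X)\subseteq \Delta Y$. Then $\Delta$ is a monad on sets (a submonad of the coterm monad): $\eta_X:X\to\Delta X$ sends $x$ to the one-node term $x$; for $g:X\to Y$, $\Delta g:\Delta X\to\Delta Y$ relabels leaves by $g$; $\mu_X:\Delta(\Delta X)\to\Delta X$ substitutes, at each leaf, the term labeling it and flattens. For an ordered algebra $A$, its structure map $\beta:\mathrm{FT}\,A\to A$ evaluates finite partial terms over $A$ in $A$ (leaf $a\mapsto a$, $\bot\mapsto\bot^A$). For $t_1,t_2\in\mathrm{CT}\,X$, write $t_1\ll t_2$ if $t_1\in\mathrm{FT}\,X$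 and $t_1$ is obtained from $t_2$ by deleting subterms (i.e. agrees with $t_2$ as a labeled tree wherever $t_1$ is defined). A subset $B\subseteq A$ is a $\Delta$-set if $B=\{\beta(s):s\ll t\}$ for some $t\in\Delta A$ (such a set is countable and directed). $A$ is a $\Delta$-regular algebra if every $\Delta$-set in $A$ has a supremum and the operations preserve suprema of $\Delta$-sets, i.e. for $f\in\Sigma_n$ and $\Delta$-sets $B_1,\dots,B_n$, $f^A(\bigvee B_1,\dots,\bigvee B_n)=\bigvee\{f^A(b_1,\dots,b_n): b_i\in B_i\}$. *)

theory Defs
  imports Main "HOL-Library.Countable_Set"
begin

text \<open>A partial (co)term over variables 'x is a partial map from positions (nat lists)
  to labels; an undefined position means a missing subterm (bottom).\<close>

datatype ('f, 'x) lab = Sym 'f | Var 'x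

type_synonym ('f, 'x) tree = "nat list \<Rightarrow> ('f, 'x) lab option"

definition wf_tree :: "('f \<Rightarrow> nat) \<Rightarrow> ('f, 'x) tree \<Rightarrow> bool" where
  "wf_tree ar t \<longleftrightarrow>
     (\<forall>p i. t (p @ [i]) \<noteq> None \<longrightarrow> (\<exists>f. t p = Some (Sym f) \<and> i < ar f))"

definition CT :: "('f \<Rightarrow> nat) \<Rightarrow> 'x set \<Rightarrow> ('f, 'x) tree set" where
  "CT ar X = {t. wf_tree ar t \<and> (\<forall>p x. t p = Some (Var x) \<longrightarrow> x \<in> X)}"

definition FT :: "('f \<Rightarrow> nat) \<Rightarrow> 'x set \<Rightarrow> ('f, 'x) tree set" where
  "FT ar X = {t \<in> CT ar X. finite (dom t)}"

text \<open>The order of CT X is extension of partial trees, i.e. map_le.\<close>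

definition bot_tree :: "('f, 'x) tree" where
  "bot_tree = (\<lambda>p. None)"

definition leaf :: "'x \<Rightarrow> ('f, 'x) tree" where
  "leaf x = (\<lambda>p. if p = [] then Some (Var x) else None)"

definition node :: "('f \<Rightarrow> nat) \<Rightarrow> 'f \<Rightarrow> ('f, 'x) tree list \<Rightarrow> ('f, 'x) tree" where
  "node ar f ts = (\<lambda>p. case p of [] \<Rightarrow> Some (Sym f)
                    | i # q \<Rightarrow> if i < ar f then (ts ! i) q else None)"

definition approx :: "('f \<Rightarrow> nat) \<Rightarrow> ('f, 'x) tree \<Rightarrow> ('f, 'x) tree \<Rightarrow> bool" where
  "approx ar t1 t2 \<longleftrightarrow> wf_tree ar t1 \<and> finite (dom t1) \<and> t1 \<subseteq>\<^sub>m t2"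

definition is_lub_on :: "('b \<Rightarrow> 'b \<Rightarrow> bool) \<Rightarrow> 'b set \<Rightarrow> 'b set \<Rightarrow> 'b \<Rightarrow> bool" where
  "is_lub_on le S B s \<longleftrightarrow> s \<in> S \<and> (\<forall>b\<in>B. le b s) \<and>
     (\<forall>u\<in>S. (\<forall>b\<in>B. le b u) \<longrightarrow> le s u)"

definition directed_on :: "('b \<Rightarrow> 'b \<Rightarrow> bool) \<Rightarrow> 'b set \<Rightarrow> bool" where
  "directed_on le D \<longleftrightarrow> D \<noteq> {} \<and> (\<forall>a\<in>D. \<forall>b\<in>D. \<exists>c\<in>D. le a c \<and> le b c)"

definition cont_morphism ::
  "('f \<Rightarrow> nat) \<Rightarrow> 'x set \<Rightarrow> 'y set \<Rightarrow> (('f, 'x) tree \<Rightarrow> ('f, 'y) tree) \<Rightarrow> bool" where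
  "cont_morphism ar X Y h \<longleftrightarrow>
     (\<forall>t\<in>CT ar X. h t \<in> CT ar Y) \<and>
     h bot_tree = bot_tree \<and>
     (\<forall>t1\<in>CT ar X. \<forall>t2\<in>CT ar X. t1 \<subseteq>\<^sub>m t2 \<longrightarrow> h t1 \<subseteq>\<^sub>m h t2) \<and>
     (\<forall>f ts. length ts = ar f \<and> set ts \<subseteq> CT ar X \<longrightarrow> h (node ar f ts) = node ar f (map h ts)) \<and>
     (\<forall>D s. D \<subseteq> CT ar X \<and> countable D \<and> directed_on (\<subseteq>\<^sub>m) D \<and>
            is_lub_on (\<subseteq>\<^sub>m) (CT ar X) D s \<longrightarrow> is_lub_on (\<subseteq>\<^sub>m) (CT ar Y) (h ` D) (h s))"

definition qr_family :: "('f \<Rightarrow> nat) \<Rightarrow> ('x set \<Rightarrow> ('f, 'x) tree set) \<Rightarrow> bool" where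
  "qr_family ar \<Delta> \<longleftrightarrow> (\<forall>X.
      \<Delta> X \<subseteq> CT ar X \<and> bot_tree \<in> \<Delta> X \<and>
      (\<forall>f ts. length ts = ar f \<and> set ts \<subseteq> \<Delta> X \<longrightarrow> node ar f ts \<in> \<Delta> X) \<and>
      leaf ` X \<subseteq> \<Delta> X)"

definition qr_pair :: "('f \<Rightarrow> nat) \<Rightarrow> ('x set \<Rightarrow> ('f, 'x) tree set) \<Rightarrow>
    ('y set \<Rightarrow> ('f, 'y) tree set) \<Rightarrow> bool" where
  "qr_pair ar \<Delta> \<Delta>' \<longleftrightarrow> (\<forall>X Y h. cont_morphism ar X Y h \<and> (\<forall>x\<in>X. h (leaf x) \<in> \<Delta>' Y)
       \<longrightarrow> h ` \<Delta> X \<subseteq> \<Delta>' Y)"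

text \<open>The quasi-regular family restricted to index sets of type 'a and of type
  ('f,'a) tree (all that the statement involves).\<close>
definition quasi_regular :: "('f \<Rightarrow> nat) \<Rightarrow> ('a set \<Rightarrow> ('f, 'a) tree set) \<Rightarrow>
    (('f, 'a) tree set \<Rightarrow> ('f, ('f, 'a) tree) tree set) \<Rightarrow> bool" where
  "quasi_regular ar \<Delta>1 \<Delta>2 \<longleftrightarrow> qr_family ar \<Delta>1 \<and> qr_family ar \<Delta>2 \<and>
     qr_pair ar \<Delta>1 \<Delta>1 \<and> qr_pair ar \<Delta>1 \<Delta>2 \<and> qr_pair ar \<Delta>2 \<Delta>1 \<and> qr_pair ar \<Delta>2 \<Delta>2"

definition eta :: "'x \<Rightarrow> ('f, 'x) tree" where
  "eta x = leaf x"

definition map_tree :: "('x \<Rightarrow> 'y) \<Rightarrow> ('f, 'x) tree \<Rightarrow> ('f, 'y) tree" where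
  "map_tree g t = (\<lambda>p. map_option (map_lab id g) (t p))"

text \<open>Flattening: at a position below a leaf labelled by a term s, read s.\<close>
definition mu :: "('f, ('f, 'x) tree) tree \<Rightarrow> ('f, 'x) tree" where
  "mu T = (\<lambda>p. if \<exists>q r s. p = q @ r \<and> T q = Some (Var s)
              then (SOME l. \<exists>q r s. p = q @ r \<and> T q = Some (Var s) \<and> l = s r)
              else (case T p of Some (Sym f) \<Rightarrow> Some (Sym f) | _ \<Rightarrow> None))"

definition ordered_algebra :: "('f \<Rightarrow> nat) \<Rightarrow> ('f \<Rightarrow> 'a::order_bot list \<Rightarrow> 'a) \<Rightarrow> bool" where
  "ordered_algebra ar I \<longleftrightarrow> (\<forall>f xs ys. length xs = ar f \<and> length ys = ar f \<and>
      (\<forall>i<ar f. xs ! i \<le> ys ! i) \<longrightarrow> I f xs \<le> I f ys)"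

definition subtree :: "('f, 'x) tree \<Rightarrow> nat list \<Rightarrow> ('f, 'x) tree" where
  "subtree t p = (\<lambda>q. t (p @ q))"

primrec eval_fuel :: "('f \<Rightarrow> nat) \<Rightarrow> ('f \<Rightarrow> 'a::order_bot list \<Rightarrow> 'a) \<Rightarrow> nat \<Rightarrow> ('f, 'a) tree \<Rightarrow> 'a" where
  "eval_fuel ar I 0 t = bot"
| "eval_fuel ar I (Suc n) t = (case t [] of None \<Rightarrow> bot
     | Some (Var a) \<Rightarrow> a
     | Some (Sym f) \<Rightarrow> I f (map (\<lambda>i. eval_fuel ar I n (subtree t [i])) [0..<ar f]))"

text \<open>beta on finite partial terms: evaluation (fuel exceeding the depth).\<close>
definition beta_fin :: "('f \<Rightarrow> nat) \<Rightarrow> ('f \<Rightarrow> 'a::order_bot list \<Rightarrow> 'a) \<Rightarrow> ('f, 'a) tree \<Rightarrow> 'a" where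
  "beta_fin ar I t = eval_fuel ar I (Suc (Max (length ` dom t))) t"

definition lubA :: "'a::order set \<Rightarrow> 'a" where
  "lubA B = (THE s. is_lub_on (\<le>) UNIV B s)"

definition delta_set :: "('f \<Rightarrow> nat) \<Rightarrow> ('f \<Rightarrow> 'a::order_bot list \<Rightarrow> 'a) \<Rightarrow>
    ('a set \<Rightarrow> ('f, 'a) tree set) \<Rightarrow> 'a set \<Rightarrow> bool" where
  "delta_set ar I \<Delta> B \<longleftrightarrow> (\<exists>t\<in>\<Delta> UNIV. B = {beta_fin ar I s | s. approx ar s t})"

definition delta_regular :: "('f \<Rightarrow> nat) \<Rightarrow> ('f \<Rightarrow> 'a::order_bot list \<Rightarrow> 'a) \<Rightarrow>
    ('a set \<Rightarrow> ('f, 'a) tree set) \<Rightarrow> bool" where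
  "delta_regular ar I \<Delta> \<longleftrightarrow> ordered_algebra ar I \<and>
     (\<forall>B. delta_set ar I \<Delta> B \<longrightarrow> (\<exists>s. is_lub_on (\<le>) UNIV B s)) \<and>
     (\<forall>f Bs. length Bs = ar f \<and> (\<forall>B\<in>set Bs. delta_set ar I \<Delta> B) \<longrightarrow>
        is_lub_on (\<le>) UNIV
          {I f bs | bs. length bs = ar f \<and> (\<forall>i<ar f. bs ! i \<in> Bs ! i)}
          (I f (map lubA Bs)))"

definition beta :: "('f \<Rightarrow> nat) \<Rightarrow> ('f \<Rightarrow> 'a::order_bot list \<Rightarrow> 'a) \<Rightarrow> ('f, 'a) tree \<Rightarrow> 'a" where
  "beta ar I t = lubA {beta_fin ar I s | s. approx ar s t}"

end

theory Submission
  imports Defs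
begin


definition Bset :: "('f \<Rightarrow> nat) \<Rightarrow> ('f \<Rightarrow> 'a::order_bot list \<Rightarrow> 'a) \<Rightarrow> ('f,'a) tree \<Rightarrow> 'a set" where
  "Bset ar I t = {beta_fin ar I s | s. approx ar s t}"

lemma wf_prefix:
  assumes "wf_tree ar t" "t (q @ i # r) \<noteq> None"
  shows "\<exists>f. t q = Some (Sym f) \<and> i < ar f"
  using assms(2)
proof (induction r rule: rev_induct)
  case Nil
  then show ?case using assms(1) unfolding wf_tree_def by simp
next
  case (snoc j r)
  have "t ((q @ i # r) @ [j]) \<noteq> None" using snoc.prems by simp
  then have "t (q @ i # r) \<noteq> None" using assms(1) unfolding wf_tree_def by blast
  then show ?case using snoc.IH by blast
qed

lemma var_prefix_unique:
  assumes "wf_tree ar T" "T q = Some (Var s)" "T (q @ us) \<noteq> None"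
  shows "us = []"
proof (cases us)
  case (Cons i r)
  then show ?thesis using wf_prefix[OF assms(1), of q i r] assms(2,3) by auto
qed simp

lemma wf_root_None: "wf_tree ar t \<Longrightarrow> t [] = None \<Longrightarrow> t = bot_tree"
proof (rule ext)
  fix p assume w: "wf_tree ar t" and n: "t [] = None"
  show "t p = bot_tree p"
  proof (cases p)
    case (Cons i r)
    then show ?thesis using wf_prefix[OF w, of "[]" i r] n by (cases "t (i # r)") (auto simp: bot_tree_def)
  qed (simp add: n bot_tree_def)
qed

lemma wf_root_Var: "wf_tree ar t \<Longrightarrow> t [] = Some (Var a) \<Longrightarrow> t = leaf a"
proof (rule ext)
  fix p assume w: "wf_tree ar t" and n: "t [] = Some (Var a)"
  show "t p = leaf a p"
  proof (cases p)
    case (Cons i r)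
    then show ?thesis using wf_prefix[OF w, of "[]" i r] n by (cases "t (i # r)") (auto simp: leaf_def)
  qed (simp add: n leaf_def)
qed

lemma wf_node: assumes "wf_tree ar t" "t [] = Some (Sym f)"
  shows "t = node ar f (map (\<lambda>i. subtree t [i]) [0..<ar f])"
proof (rule ext)
  fix p
  show "t p = node ar f (map (\<lambda>i. subtree t [i]) [0..<ar f]) p"
  proof (cases p)
    case (Cons i r)
    then show ?thesis using wf_prefix[OF assms(1), of "[]" i r] assms(2)
      by (cases "t (i # r)") (auto simp: node_def subtree_def)
  qed (simp add: assms node_def)
qed

lemma wf_subtree: "wf_tree ar t \<Longrightarrow> wf_tree ar (subtree t p)"
  unfolding wf_tree_def subtree_def by (metis append_assoc)

lemma finite_dom_subtree: "finite (dom t) \<Longrightarrow> finite (dom (subtree t p))"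
proof -
  assume "finite (dom t)"
  moreover have "dom (subtree t p) = (\<lambda>q. p @ q) -` dom t" by (auto simp: subtree_def)
  ultimately show ?thesis by (simp add: finite_vimageI inj_on_def)
qed

lemma dom_map_tree: "dom (map_tree g t) = dom t"
  by (auto simp: map_tree_def)

lemma map_tree_Sym: "(map_tree g t p = Some (Sym f)) = (t p = Some (Sym f))"
proof (cases "t p")
  case (Some l) then show ?thesis by (cases l) (auto simp: map_tree_def)
qed (simp add: map_tree_def)

lemma wf_map_tree: "wf_tree ar (map_tree g t) = wf_tree ar t"
  unfolding wf_tree_def by (simp add: map_tree_Sym) (simp add: map_tree_def)

lemma subtree_map_tree: "subtree (map_tree g t) p = map_tree g (subtree t p)"
  by (simp add: subtree_def map_tree_def)




lemma eval_fuel_indep: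
  "\<forall>p\<in>dom t. length p < m \<Longrightarrow> m \<le> k \<Longrightarrow> eval_fuel ar I m t = eval_fuel ar I k t"
proof (induction m arbitrary: t k)
  case 0
  then have "t [] = None" by fastforce
  then show ?case by (cases k) auto
next
  case (Suc m)
  then obtain k' where k: "k = Suc k'" "m \<le> k'" by (cases k) auto
  have IH: "eval_fuel ar I m (subtree t [i]) = eval_fuel ar I k' (subtree t [i])" for i
  proof (rule Suc.IH)
    show "\<forall>p\<in>dom (subtree t [i]). length p < m"
      using Suc.prems(1) by (auto simp: subtree_def dom_def)
  qed (rule k(2))
  show ?case using IH k(1) by (simp split: option.split lab.split)
qed

lemma beta_fin_eq:
  assumes "finite (dom t)" "\<forall>p\<in>dom t. length p < n"
  shows "beta_fin ar I t = eval_fuel ar I n t"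
proof (cases "dom t = {}")
  case True
  then have "t [] = None" by auto
  then show ?thesis by (cases n) (auto simp: beta_fin_def)
next
  case False
  define M where "M = Max (length ` dom t)"
  have "M \<in> length ` dom t" using False assms(1) unfolding M_def by (intro Max_in) auto
  then obtain p where "p \<in> dom t" "M = length p" by auto
  then have "Suc M \<le> n" using assms(2) by (simp add: Suc_le_eq)
  moreover have "\<forall>p\<in>dom t. length p < Suc M" using assms(1) unfolding M_def
    by (simp add: le_imp_less_Suc)
  ultimately show ?thesis unfolding beta_fin_def M_def[symmetric]
    using eval_fuel_indep by blast
qed

lemma beta_fin_None: "t [] = None \<Longrightarrow> beta_fin ar I t = bot"
  by (simp add: beta_fin_def)

lemma beta_fin_Var: "t [] = Some (Var a) \<Longrightarrow> beta_fin ar I t = a"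
  by (simp add: beta_fin_def)

lemma beta_fin_Sym:
  assumes "finite (dom t)" "t [] = Some (Sym f)"
  shows "beta_fin ar I t = I f (map (\<lambda>i. beta_fin ar I (subtree t [i])) [0..<ar f])"
proof -
  define M where "M = Max (length ` dom t)"
  have e: "eval_fuel ar I M (subtree t [i]) = beta_fin ar I (subtree t [i])" for i
  proof (rule beta_fin_eq[symmetric])
    show "finite (dom (subtree t [i]))" using assms(1) by (rule finite_dom_subtree)
    show "\<forall>p\<in>dom (subtree t [i]). length p < M"
    proof
      fix p assume "p \<in> dom (subtree t [i])"
      then have "i # p \<in> dom t" by (auto simp: subtree_def)
      then have "length (i # p) \<le> M" unfolding M_def using assms(1) by (intro Max_ge) blast+
      then show "length p < M" by simp
    qed
  qed
  have "beta_fin ar I t = eval_fuel ar I (Suc M) t" by (simp only: beta_fin_def M_def)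
  also have "\<dots> = I f (map (\<lambda>i. eval_fuel ar I M (subtree t [i])) [0..<ar f])"
    using assms(2) by simp
  finally show ?thesis by (simp only: e)
qed

lemma mu_Var:
  assumes w: "wf_tree ar T" and v: "T q = Some (Var s)"
  shows "mu T (q @ r) = s r"
proof -
  have ex: "\<exists>q' r' s'. q @ r = q' @ r' \<and> T q' = Some (Var s')" using v by blast
  have "(SOME l. \<exists>q' r' s'. q @ r = q' @ r' \<and> T q' = Some (Var s') \<and> l = s' r') = s r"
  proof (rule some_equality)
    show "\<exists>q' r' s'. q @ r = q' @ r' \<and> T q' = Some (Var s') \<and> s r = s' r'" using v by blast
  next
    fix l assume "\<exists>q' r' s'. q @ r = q' @ r' \<and> T q' = Some (Var s') \<and> l = s' r'"
    then obtain q' r' s' where h: "q @ r = q' @ r'" "T q' = Some (Var s')" "l = s' r'" by blast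
    from h(1) obtain us where "q = q' @ us \<and> us @ r = r' \<or> q @ us = q' \<and> r = us @ r'"
      by (auto simp: append_eq_append_conv2)
    then show "l = s r"
    proof
      assume a: "q = q' @ us \<and> us @ r = r'"
      then have "us = []" using var_prefix_unique[OF w h(2), of us] v by auto
      then show ?thesis using a h v by auto
    next
      assume a: "q @ us = q' \<and> r = us @ r'"
      then have "us = []" using var_prefix_unique[OF w v, of us] h by auto
      then show ?thesis using a h v by auto
    qed
  qed
  then show ?thesis using ex by (simp add: mu_def)
qed

lemma mu_noVar: assumes "\<not>(\<exists>q r s. p = q @ r \<and> T q = Some (Var s))"
  shows "mu T p = (case T p of Some (Sym f) \<Rightarrow> Some (Sym f) | _ \<Rightarrow> None)"
proof -
  have "mu T p = (if (\<exists>q r s. p = q @ r \<and> T q = Some (Var s))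
              then (SOME l. \<exists>q r s. p = q @ r \<and> T q = Some (Var s) \<and> l = s r)
              else (case T p of Some (Sym f) \<Rightarrow> Some (Sym f) | _ \<Rightarrow> None))"
    by (simp only: mu_def)
  also have "\<dots> = (case T p of Some (Sym f) \<Rightarrow> Some (Sym f) | _ \<Rightarrow> None)"
    using assms by (rule if_not_P)
  finally show ?thesis .
qed

lemma mu_Sym: assumes w: "wf_tree ar T" and s: "T p = Some (Sym f)"
  shows "mu T p = Some (Sym f)"
proof -
  have nv: "\<not>(\<exists>q r s. p = q @ r \<and> T q = Some (Var s))"
  proof
    assume "\<exists>q r s. p = q @ r \<and> T q = Some (Var s)"
    then obtain q r s' where h: "p = q @ r" "T q = Some (Var s')" by blast
    then have "r = []" using var_prefix_unique[OF w h(2), of r] s by auto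
    then show False using h s by auto
  qed
  show ?thesis using mu_noVar[OF nv] s by simp
qed

lemma wf_leaf: "wf_tree ar (leaf a)"
  by (simp add: wf_tree_def leaf_def)

lemma mu_bot: "mu bot_tree = bot_tree"
  by (rule ext) (simp add: mu_def bot_tree_def)

lemma mu_leaf: "mu (leaf s) = s"
  by (rule ext) (metis append_Nil mu_Var[OF wf_leaf] leaf_def)

lemma mu_Cons:
  assumes w: "wf_tree ar c" and r: "c [] = Some (Sym f)"
  shows "mu c (i # q) = (if i < ar f then mu (subtree c [i]) q else None)"
proof (cases "\<exists>q' r s. q = q' @ r \<and> subtree c [i] q' = Some (Var s)")
  case True
  then obtain q' r s where h: "q = q' @ r" "subtree c [i] q' = Some (Var s)" by blast
  then have c: "c (i # q') = Some (Var s)" by (simp add: subtree_def)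
  then have "i < ar f" using wf_prefix[OF w, of "[]" i q'] r by auto
  then show ?thesis using mu_Var[OF w c, of r] mu_Var[OF wf_subtree[OF w] h(2), of r] h(1) by simp
next
  case False
  have nv: "\<not>(\<exists>q'' r s. i # q = q'' @ r \<and> c q'' = Some (Var s))"
  proof
    assume "\<exists>q'' r s. i # q = q'' @ r \<and> c q'' = Some (Var s)"
    then obtain q'' r s where h: "i # q = q'' @ r" "c q'' = Some (Var s)" by blast
    show False
    proof (cases q'')
      case Nil then show ?thesis using h r by simp
    next
      case (Cons j q3)
      then show ?thesis using h False by (auto simp: subtree_def)
    qed
  qed
  show ?thesis
  proof (cases "i < ar f")
    case True
    then show ?thesis using mu_noVar[OF nv] mu_noVar[OF False] by (simp add: subtree_def)
  next
    case False
    then have "c (i # q) = None" using wf_prefix[OF w, of "[]" i q] r by (cases "c (i # q)") auto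
    then show ?thesis using mu_noVar[OF nv] False by simp
  qed
qed

lemma mu_node:
  assumes w: "wf_tree ar c" and r: "c [] = Some (Sym f)"
  shows "mu c = node ar f (map (\<lambda>i. mu (subtree c [i])) [0..<ar f])"
proof (rule ext)
  fix p show "mu c p = node ar f (map (\<lambda>i. mu (subtree c [i])) [0..<ar f]) p"
    by (cases p) (auto simp: node_def mu_Sym[OF w r] mu_Cons[OF w r])
qed




lemma lub_unique: "is_lub_on (\<le>) UNIV B (x::'a::order) \<Longrightarrow> lubA B = x"
  unfolding lubA_def
  by (rule the_equality) (auto simp: is_lub_on_def intro: order.antisym)

lemma lub_insert_bot: "is_lub_on (\<le>) UNIV B (x::'a::order_bot) \<Longrightarrow> is_lub_on (\<le>) UNIV (insert bot B) x"
  by (auto simp: is_lub_on_def)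

lemma map_leI: "(\<And>a v. m1 a = Some v \<Longrightarrow> m2 a = Some v) \<Longrightarrow> m1 \<subseteq>\<^sub>m m2"
  by (auto simp: map_le_def dom_def)

lemma approx_bot: "approx ar s bot_tree \<longleftrightarrow> s = bot_tree"
  by (auto simp: approx_def bot_tree_def map_le_def wf_tree_def)

lemma Bset_bot: "Bset ar I bot_tree = {bot}"
  unfolding Bset_def approx_bot by (simp add: beta_fin_None bot_tree_def)

lemma Bset_node:
  assumes len: "length ws = ar f"
  shows "Bset ar I (node ar f ws) = insert bot {I f bs | bs. length bs = ar f \<and> (\<forall>i<ar f. bs ! i \<in> Bset ar I (ws ! i))}"
proof (rule set_eqI, rule iffI)
  fix x assume "x \<in> Bset ar I (node ar f ws)"
  then obtain s where x: "x = beta_fin ar I s" and a: "approx ar s (node ar f ws)"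
    by (auto simp: Bset_def)
  have w: "wf_tree ar s" and fi: "finite (dom s)" and le: "s \<subseteq>\<^sub>m node ar f ws"
    using a by (auto simp: approx_def)
  show "x \<in> insert bot {I f bs | bs. length bs = ar f \<and> (\<forall>i<ar f. bs ! i \<in> Bset ar I (ws ! i))}"
  proof (cases "s []")
    case None then show ?thesis using x beta_fin_None by auto
  next
    case (Some l)
    then have r: "s [] = Some (Sym f)" using le by (auto simp: map_le_def node_def dom_def)
    define bs where "bs = map (\<lambda>i. beta_fin ar I (subtree s [i])) [0..<ar f]"
    have "x = I f bs" using beta_fin_Sym[OF fi r] x bs_def by simp
    moreover have "bs ! i \<in> Bset ar I (ws ! i)" if i: "i < ar f" for i
    proof -
      have "approx ar (subtree s [i]) (ws ! i)"
        unfolding approx_def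
      proof (intro conjI)
        show "wf_tree ar (subtree s [i])" using w by (rule wf_subtree)
        show "finite (dom (subtree s [i]))" using fi by (rule finite_dom_subtree)
        show "subtree s [i] \<subseteq>\<^sub>m ws ! i"
        proof (rule map_leI)
          fix q v assume "subtree s [i] q = Some v"
          then have "s (i # q) = Some v" by (simp add: subtree_def)
          then have "node ar f ws (i # q) = Some v" using le by (auto simp: map_le_def dom_def)
          then show "(ws ! i) q = Some v" using i by (simp add: node_def)
        qed
      qed
      then show ?thesis using i by (auto simp: Bset_def bs_def)
    qed
    ultimately show ?thesis by (auto simp: bs_def)
  qed
next
  fix x assume "x \<in> insert bot {I f bs | bs. length bs = ar f \<and> (\<forall>i<ar f. bs ! i \<in> Bset ar I (ws ! i))}"
  then show "x \<in> Bset ar I (node ar f ws)"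
  proof
    assume "x = bot"
    moreover have "approx ar bot_tree (node ar f ws)"
      by (simp add: approx_def bot_tree_def wf_tree_def map_le_def)
    ultimately show ?thesis using beta_fin_None[of bot_tree ar I]
      unfolding Bset_def by (metis (mono_tags, lifting) bot_tree_def mem_Collect_eq)
  next
    assume "x \<in> {I f bs | bs. length bs = ar f \<and> (\<forall>i<ar f. bs ! i \<in> Bset ar I (ws ! i))}"
    then obtain bs where x: "x = I f bs" and lb: "length bs = ar f"
      and bsi: "\<forall>i<ar f. bs ! i \<in> Bset ar I (ws ! i)" by blast
    have "\<forall>i<ar f. \<exists>z. approx ar z (ws ! i) \<and> bs ! i = beta_fin ar I z"
      using bsi by (auto simp: Bset_def)
    then obtain zf where zf: "\<And>i. i < ar f \<Longrightarrow> approx ar (zf i) (ws ! i) \<and> bs ! i = beta_fin ar I (zf i)"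
      by metis
    define s where "s = node ar f (map zf [0..<ar f])"
    have s_root: "s [] = Some (Sym f)" by (simp add: s_def node_def)
    have s_Cons: "s (i # q) = (if i < ar f then zf i q else None)" for i q
      by (simp add: s_def node_def)
    have wfs: "wf_tree ar s"
      unfolding wf_tree_def
    proof (intro allI impI)
      fix p i assume h: "s (p @ [i]) \<noteq> None"
      show "\<exists>g. s p = Some (Sym g) \<and> i < ar g"
      proof (cases p)
        case Nil
        then show ?thesis using h s_root s_Cons[of i "[]"] by (auto split: if_splits)
      next
        case (Cons j p')
        then have j: "j < ar f" and z: "zf j (p' @ [i]) \<noteq> None" using h s_Cons[of j "p' @ [i]"]
          by (auto split: if_splits)
        have "wf_tree ar (zf j)" using zf[OF j] by (simp add: approx_def)
        then show ?thesis using z Cons s_Cons[of j p'] j unfolding wf_tree_def by auto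
      qed
    qed
    have "dom s \<subseteq> insert [] (\<Union>j<ar f. Cons j ` dom (zf j))"
    proof
      fix p assume "p \<in> dom s"
      then show "p \<in> insert [] (\<Union>j<ar f. Cons j ` dom (zf j))"
        by (cases p) (force simp: s_Cons split: if_splits)+
    qed
    moreover have "finite (insert [] (\<Union>j<ar f. Cons j ` dom (zf j)))"
      using zf by (auto simp: approx_def)
    ultimately have fs: "finite (dom s)" by (rule finite_subset)
    have les: "s \<subseteq>\<^sub>m node ar f ws"
    proof (rule map_leI)
      fix p v assume h: "s p = Some v"
      show "node ar f ws p = Some v"
      proof (cases p)
        case Nil then show ?thesis using h s_root by (simp add: node_def)
      next
        case (Cons j q)
        then have j: "j < ar f" and z: "zf j q = Some v" using h s_Cons by (auto split: if_splits)
        have "zf j \<subseteq>\<^sub>m ws ! j" using zf[OF j] by (simp add: approx_def)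
        then have "(ws ! j) q = Some v" using z by (auto simp: map_le_def dom_def)
        then show ?thesis using Cons j by (simp add: node_def)
      qed
    qed
    have sub: "subtree s [i] = zf i" if "i < ar f" for i
      using that by (auto simp: subtree_def s_Cons)
    have "beta_fin ar I s = I f (map (\<lambda>i. beta_fin ar I (subtree s [i])) [0..<ar f])"
      by (rule beta_fin_Sym[OF fs s_root])
    also have "map (\<lambda>i. beta_fin ar I (subtree s [i])) [0..<ar f] = bs"
      by (rule nth_equalityI) (auto simp: lb sub zf)
    finally have "beta_fin ar I s = x" using x by simp
    then show ?thesis using wfs fs les by (auto simp: Bset_def approx_def)
  qed
qed

lemma delta_set_Bset: "w \<in> \<Delta> UNIV \<Longrightarrow> delta_set ar I \<Delta> (Bset ar I w)"
  by (auto simp: delta_set_def Bset_def)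




lemma key:
  fixes ar :: "'f \<Rightarrow> nat" and I :: "'f \<Rightarrow> 'a::order_bot list \<Rightarrow> 'a"
    and \<Delta>1 :: "'a set \<Rightarrow> ('f, 'a) tree set"
  assumes QR: "qr_family ar \<Delta>1" and DR: "delta_regular ar I \<Delta>1"
  shows "wf_tree ar c \<Longrightarrow> finite (dom c) \<Longrightarrow> (\<forall>p s. c p = Some (Var s) \<longrightarrow> s \<in> \<Delta>1 UNIV)
    \<Longrightarrow> (\<forall>p\<in>dom c. length p < n) \<Longrightarrow>
     mu c \<in> \<Delta>1 UNIV \<and> is_lub_on (\<le>) UNIV (Bset ar I (mu c)) (beta_fin ar I (map_tree (beta ar I) c))"
proof -
  have DR2: "\<And>B. delta_set ar I \<Delta>1 B \<Longrightarrow> \<exists>s. is_lub_on (\<le>) UNIV B s"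
    using DR unfolding delta_regular_def by (elim conjE) (rule allE, assumption, erule mp)
  have DR3: "\<And>f Bs. length Bs = ar f \<Longrightarrow> (\<forall>B\<in>set Bs. delta_set ar I \<Delta>1 B) \<Longrightarrow>
        is_lub_on (\<le>) UNIV
          {I f bs | bs. length bs = ar f \<and> (\<forall>i<ar f. bs ! i \<in> Bs ! i)}
          (I f (map lubA Bs))"
    using DR unfolding delta_regular_def by (elim conjE) (erule allE, erule allE, erule mp, rule conjI)
  show "wf_tree ar c \<Longrightarrow> finite (dom c) \<Longrightarrow> (\<forall>p s. c p = Some (Var s) \<longrightarrow> s \<in> \<Delta>1 UNIV)
    \<Longrightarrow> (\<forall>p\<in>dom c. length p < n) \<Longrightarrow>
     mu c \<in> \<Delta>1 UNIV \<and> is_lub_on (\<le>) UNIV (Bset ar I (mu c)) (beta_fin ar I (map_tree (beta ar I) c))"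
proof (induction n arbitrary: c)
  case (0 c)
  have "c [] = None" using "0.prems"(4) by (cases "c []") auto
  then have "c = bot_tree" using wf_root_None "0.prems"(1) by blast
  moreover have "bot_tree \<in> \<Delta>1 UNIV" using QR by (simp add: qr_family_def)
  moreover have "beta_fin ar I (map_tree (beta ar I) bot_tree) = bot"
    by (rule beta_fin_None) (simp add: map_tree_def bot_tree_def)
  ultimately show ?case
    by (simp add: mu_bot Bset_bot beta_fin_None is_lub_on_def)
next
  case (Suc n c)
  show ?case
  proof (cases "c []")
    case None
    then have "c = bot_tree" using wf_root_None Suc.prems(1) by blast
    moreover have "bot_tree \<in> \<Delta>1 UNIV" using QR by (simp add: qr_family_def)
    moreover have "beta_fin ar I (map_tree (beta ar I) bot_tree) = bot"
    by (rule beta_fin_None) (simp add: map_tree_def bot_tree_def)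
    ultimately show ?thesis
      by (simp add: mu_bot Bset_bot beta_fin_None is_lub_on_def)
  next
    case (Some l)
    show ?thesis
    proof (cases l)
      case (Var s)
      then have cs: "c [] = Some (Var s)" using Some by simp
      have c: "c = leaf s" by (rule wf_root_Var[OF Suc.prems(1) cs])
      have sD: "s \<in> \<Delta>1 UNIV" using Suc.prems(3) cs by simp
      obtain x where x: "is_lub_on (\<le>) UNIV (Bset ar I s) x"
        using DR2[OF delta_set_Bset[of s \<Delta>1, OF sD]] by (elim exE)
      have "beta ar I s = x" using lub_unique[OF x] by (simp add: beta_def Bset_def)
      moreover have "map_tree (beta ar I) c [] = Some (Var (beta ar I s))"
        using cs by (simp add: map_tree_def)
      ultimately have "beta_fin ar I (map_tree (beta ar I) c) = x" by (simp add: beta_fin_Var)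
      moreover have "mu c = s" using c mu_leaf by simp
      ultimately show ?thesis using sD x by simp
    next
      case (Sym f)
      then have r: "c [] = Some (Sym f)" using Some by simp
      define ws where "ws = map (\<lambda>i. mu (subtree c [i])) [0..<ar f]"
      have lw: "length ws = ar f" by (simp add: ws_def)
      have IH: "mu (subtree c [i]) \<in> \<Delta>1 UNIV \<and> is_lub_on (\<le>) UNIV (Bset ar I (mu (subtree c [i])))
          (beta_fin ar I (map_tree (beta ar I) (subtree c [i])))" for i
      proof (rule Suc.IH)
        show "wf_tree ar (subtree c [i])" using Suc.prems(1) by (rule wf_subtree)
        show "finite (dom (subtree c [i]))" using Suc.prems(2) by (rule finite_dom_subtree)
        show "\<forall>p s. subtree c [i] p = Some (Var s) \<longrightarrow> s \<in> \<Delta>1 UNIV"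
          using Suc.prems(3) by (simp add: subtree_def)
        show "\<forall>p\<in>dom (subtree c [i]). length p < n"
          using Suc.prems(4) by (auto simp: subtree_def dom_def)
      qed
      have mc: "mu c = node ar f ws" using mu_node[OF Suc.prems(1) r] by (simp add: ws_def)
      have wsD: "set ws \<subseteq> \<Delta>1 UNIV" using IH by (auto simp: ws_def)
      have inD: "mu c \<in> \<Delta>1 UNIV" using QR lw wsD mc by (simp add: qr_family_def)
      define Bs where "Bs = map (Bset ar I) ws"
      have "length Bs = ar f" by (simp add: Bs_def lw)
      moreover have "\<forall>B\<in>set Bs. delta_set ar I \<Delta>1 B"
        using wsD delta_set_Bset[of _ \<Delta>1 ar I] by (auto simp: Bs_def)
      ultimately have L: "is_lub_on (\<le>) UNIV
          {I f bs | bs. length bs = ar f \<and> (\<forall>i<ar f. bs ! i \<in> Bs ! i)} (I f (map lubA Bs))"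
        by (rule DR3)
      have ml: "map lubA Bs = map (\<lambda>i. beta_fin ar I (map_tree (beta ar I) (subtree c [i]))) [0..<ar f]"
        using IH lub_unique by (auto simp: Bs_def ws_def)
      have fm: "finite (dom (map_tree (beta ar I) c))" using Suc.prems(2) by (simp add: dom_map_tree)
      have rm: "map_tree (beta ar I) c [] = Some (Sym f)" using r by (simp add: map_tree_Sym)
      have bf: "beta_fin ar I (map_tree (beta ar I) c) = I f (map lubA Bs)"
        using beta_fin_Sym[OF fm rm] ml by (simp add: subtree_map_tree)
      have "Bset ar I (mu c) = insert bot {I f bs | bs. length bs = ar f \<and> (\<forall>i<ar f. bs ! i \<in> Bset ar I (ws ! i))}"
        unfolding mc by (rule Bset_node[of ws ar f I, OF lw])
      also have "\<dots> = insert bot {I f bs | bs. length bs = ar f \<and> (\<forall>i<ar f. bs ! i \<in> Bs ! i)}"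
        unfolding Bs_def using lw by (metis (no_types, lifting) nth_map)
      finally show ?thesis using inD bf lub_insert_bot[OF L] by simp
    qed
  qed
qed
qed




lemma lubA_cong:
  assumes "\<And>y. (\<forall>b\<in>A. b \<le> y) = (\<forall>b\<in>B. b \<le> (y::'a::order))"
  shows "lubA A = lubA B"
proof -
  have "is_lub_on (\<le>) UNIV A = is_lub_on (\<le>) UNIV B"
    by (rule ext) (simp add: is_lub_on_def assms)
  then show ?thesis by (simp add: lubA_def)
qed

lemma beta_Bset: "beta ar I t = lubA (Bset ar I t)"
  by (simp add: beta_def Bset_def)

lemma mu_mono:
  assumes wT: "wf_tree ar T" and wc: "wf_tree ar c" and le: "c \<subseteq>\<^sub>m T"
  shows "mu c \<subseteq>\<^sub>m mu T"
proof (rule map_leI)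
  fix p v assume h: "mu c p = Some v"
  show "mu T p = Some v"
  proof (cases "\<exists>q r s. p = q @ r \<and> c q = Some (Var s)")
    case True
    then obtain q r s where a: "p = q @ r" "c q = Some (Var s)" by blast
    then have b: "T q = Some (Var s)" using le by (auto simp: map_le_def dom_def)
    show ?thesis using h mu_Var[OF wc a(2), of r] mu_Var[OF wT b, of r] a(1) by simp
  next
    case False
    then have "(case c p of Some (Sym f) \<Rightarrow> Some (Sym f) | _ \<Rightarrow> None) = Some v"
      using h mu_noVar by metis
    then obtain f where f: "c p = Some (Sym f)" "v = Sym f"
      by (auto split: option.splits lab.splits)
    then have "T p = Some (Sym f)" using le by (auto simp: map_le_def dom_def)
    then show ?thesis using mu_Sym[OF wT] f by simp
  qed
qed

lemma finite_bound: "finite (dom c) \<Longrightarrow> \<exists>n. \<forall>p\<in>dom c. length p < n"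
proof -
  assume "finite (dom c)"
  then have "finite (length ` dom c)" by simp
  then obtain n where "\<forall>x\<in>length ` dom c. x < n" using finite_nat_set_iff_bounded by blast
  then show ?thesis by auto
qed

lemma finite_prefixes: "finite D \<Longrightarrow> finite {q. \<exists>p\<in>D. \<exists>r. p = q @ r}"
proof -
  assume D: "finite D"
  have "{q. \<exists>p\<in>D. \<exists>r. p = q @ r} \<subseteq> (\<Union>p\<in>D. (\<lambda>k. take k p) ` {..length p})"
  proof
    fix q assume "q \<in> {q. \<exists>p\<in>D. \<exists>r. p = q @ r}"
    then obtain p r where "p \<in> D" "p = q @ r" by blast
    then show "q \<in> (\<Union>p\<in>D. (\<lambda>k. take k p) ` {..length p})"
      by (intro UN_I[of p]) (auto intro!: image_eqI[of _ _ "length q"])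
  qed
  moreover have "finite (\<Union>p\<in>D. (\<lambda>k. take k p) ` {..length p})" using D by simp
  ultimately show ?thesis by (rule finite_subset)
qed




lemma main_eq:
  fixes ar :: "'f \<Rightarrow> nat" and I :: "'f \<Rightarrow> 'a::order_bot list \<Rightarrow> 'a"
    and \<Delta>1 :: "'a set \<Rightarrow> ('f, 'a) tree set"
  assumes QR: "qr_family ar \<Delta>1" and DR: "delta_regular ar I \<Delta>1"
    and wT: "wf_tree ar T" and lv: "\<forall>p s. T p = Some (Var s) \<longrightarrow> s \<in> \<Delta>1 UNIV"
  shows "beta ar I (mu T) = beta ar I (map_tree (beta ar I) T)"
proof -
  let ?g = "beta ar I"
  have K: "is_lub_on (\<le>) UNIV (Bset ar I (mu c)) (beta_fin ar I (map_tree ?g c))"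
    if c: "wf_tree ar c" "finite (dom c)" "c \<subseteq>\<^sub>m T" for c
  proof -
    obtain n where n: "\<forall>p\<in>dom c. length p < n" using finite_bound[OF c(2)] by blast
    have l: "\<forall>p s. c p = Some (Var s) \<longrightarrow> s \<in> \<Delta>1 UNIV"
    proof (intro allI impI)
      fix p s assume "c p = Some (Var s)"
      then have "T p = Some (Var s)" using c(3) by (auto simp: map_le_def dom_def)
      then show "s \<in> \<Delta>1 UNIV" using lv by simp
    qed
    show ?thesis using key[OF QR DR c(1) c(2) l n] by (rule conjunct2)
  qed
  have A: "\<exists>c. wf_tree ar c \<and> finite (dom c) \<and> c \<subseteq>\<^sub>m T \<and> u = map_tree ?g c"
    if u: "approx ar u (map_tree ?g T)" for u
  proof -
    have wu: "wf_tree ar u" and fu: "finite (dom u)" and lu: "u \<subseteq>\<^sub>m map_tree ?g T"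
      using u by (auto simp: approx_def)
    define c where "c = (\<lambda>p. if p \<in> dom u then T p else None)"
    have le: "c \<subseteq>\<^sub>m T" by (auto simp: c_def map_le_def dom_def)
    have "dom c \<subseteq> dom u" by (auto simp: c_def dom_def split: if_splits)
    then have fin: "finite (dom c)" using fu by (rule finite_subset)
    have wf: "wf_tree ar c" unfolding wf_tree_def
    proof (intro allI impI)
      fix p i assume h: "c (p @ [i]) \<noteq> None"
      then have "p @ [i] \<in> dom u" "T (p @ [i]) \<noteq> None" by (auto simp: c_def split: if_splits)
      then have "u (p @ [i]) \<noteq> None" by auto
      then have "p \<in> dom u" using wu unfolding wf_tree_def by blast
      moreover have "\<exists>f. T p = Some (Sym f) \<and> i < ar f"
        using wT \<open>T (p @ [i]) \<noteq> None\<close> unfolding wf_tree_def by blast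
      ultimately show "\<exists>f. c p = Some (Sym f) \<and> i < ar f" by (simp add: c_def)
    qed
    have eq: "u = map_tree ?g c"
    proof (rule ext)
      fix p show "u p = map_tree ?g c p"
      proof (cases "p \<in> dom u")
        case True
        then have "u p = map_tree ?g T p" using lu by (auto simp: map_le_def)
        then show ?thesis using True by (simp add: c_def map_tree_def)
      next
        case False
        then show ?thesis by (auto simp: c_def map_tree_def)
      qed
    qed
    show ?thesis using wf fin le eq by blast
  qed
  have B: "\<exists>c. wf_tree ar c \<and> finite (dom c) \<and> c \<subseteq>\<^sub>m T \<and> z \<subseteq>\<^sub>m mu c"
    if z: "approx ar z (mu T)" for z
  proof -
    have fz: "finite (dom z)" and lz: "z \<subseteq>\<^sub>m mu T"
      using z by (auto simp: approx_def)
    define P where "P = {q. \<exists>p\<in>dom z. \<exists>r. p = q @ r}"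
    define c where "c = (\<lambda>q. if q \<in> P then T q else None)"
    have le: "c \<subseteq>\<^sub>m T" by (auto simp: c_def map_le_def dom_def)
    have "dom c \<subseteq> P" by (auto simp: c_def dom_def split: if_splits)
    moreover have "finite P" unfolding P_def using fz by (rule finite_prefixes)
    ultimately have fin: "finite (dom c)" by (rule finite_subset)
    have wf: "wf_tree ar c" unfolding wf_tree_def
    proof (intro allI impI)
      fix p i assume h: "c (p @ [i]) \<noteq> None"
      then have "p @ [i] \<in> P" "T (p @ [i]) \<noteq> None" by (auto simp: c_def split: if_splits)
      then obtain p' r where pr: "p' \<in> dom z" "p' = (p @ [i]) @ r" unfolding P_def by blast
      then have "p' = p @ ([i] @ r)" by simp
      then have "p \<in> P" using pr(1) unfolding P_def by blast
      moreover have "\<exists>f. T p = Some (Sym f) \<and> i < ar f"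
        using wT \<open>T (p @ [i]) \<noteq> None\<close> unfolding wf_tree_def by blast
      ultimately show "\<exists>f. c p = Some (Sym f) \<and> i < ar f" by (simp add: c_def)
    qed
    have zc: "z \<subseteq>\<^sub>m mu c"
    proof (rule map_leI)
      fix p v assume h: "z p = Some v"
      then have mT: "mu T p = Some v" using lz by (auto simp: map_le_def dom_def)
      have pP: "p \<in> P" using h unfolding P_def by auto
      show "mu c p = Some v"
      proof (cases "\<exists>q r s. p = q @ r \<and> T q = Some (Var s)")
        case True
        then obtain q r s where a: "p = q @ r" "T q = Some (Var s)" by blast
        have "q \<in> P" using h a(1) unfolding P_def by auto
        then have cq: "c q = Some (Var s)" using a(2) by (simp add: c_def)
        show ?thesis using mT mu_Var[OF wT a(2), of r] mu_Var[OF wf cq, of r] a(1) by simp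
      next
        case False
        then have "(case T p of Some (Sym f) \<Rightarrow> Some (Sym f) | _ \<Rightarrow> None) = Some v"
          using mT mu_noVar by metis
        then obtain f where f: "T p = Some (Sym f)" "v = Sym f"
          by (auto split: option.splits lab.splits)
        then have "c p = Some (Sym f)" using pP by (simp add: c_def)
        then show ?thesis using mu_Sym[OF wf] f by simp
      qed
    qed
    show ?thesis using wf fin le zc by blast
  qed
  have ub: "(\<forall>b\<in>Bset ar I (mu T). b \<le> y) = (\<forall>b\<in>Bset ar I (map_tree ?g T). b \<le> y)" for y
  proof
    assume H: "\<forall>b\<in>Bset ar I (mu T). b \<le> y"
    show "\<forall>b\<in>Bset ar I (map_tree ?g T). b \<le> y"
    proof
      fix b assume "b \<in> Bset ar I (map_tree ?g T)"
      then obtain u where b: "b = beta_fin ar I u" and u: "approx ar u (map_tree ?g T)"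
        by (auto simp: Bset_def)
      obtain c where c: "wf_tree ar c" "finite (dom c)" "c \<subseteq>\<^sub>m T" "u = map_tree ?g c"
        using A[OF u] by blast
      have L: "is_lub_on (\<le>) UNIV (Bset ar I (mu c)) (beta_fin ar I (map_tree ?g c))"
        using K[OF c(1-3)] .
      have mm: "mu c \<subseteq>\<^sub>m mu T" using mu_mono[OF wT c(1) c(3)] .
      have "Bset ar I (mu c) \<subseteq> Bset ar I (mu T)"
        using mm by (auto simp: Bset_def approx_def intro: map_le_trans)
      then have "\<forall>b\<in>Bset ar I (mu c). b \<le> y" using H by blast
      then show "b \<le> y" using L b c(4) by (auto simp: is_lub_on_def)
    qed
  next
    assume H: "\<forall>b\<in>Bset ar I (map_tree ?g T). b \<le> y"
    show "\<forall>b\<in>Bset ar I (mu T). b \<le> y"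
    proof
      fix b assume "b \<in> Bset ar I (mu T)"
      then obtain z where b: "b = beta_fin ar I z" and z: "approx ar z (mu T)"
        by (auto simp: Bset_def)
      obtain c where c: "wf_tree ar c" "finite (dom c)" "c \<subseteq>\<^sub>m T" "z \<subseteq>\<^sub>m mu c"
        using B[OF z] by blast
      have L: "is_lub_on (\<le>) UNIV (Bset ar I (mu c)) (beta_fin ar I (map_tree ?g c))"
        using K[OF c(1-3)] .
      have "b \<in> Bset ar I (mu c)" using z c(4) b by (auto simp: Bset_def approx_def)
      then have "b \<le> beta_fin ar I (map_tree ?g c)" using L by (auto simp: is_lub_on_def)
      moreover have "approx ar (map_tree ?g c) (map_tree ?g T)"
        unfolding approx_def
      proof (intro conjI)
        show "wf_tree ar (map_tree ?g c)" using c(1) by (simp add: wf_map_tree)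
        show "finite (dom (map_tree ?g c))" using c(2) by (simp add: dom_map_tree)
        show "map_tree ?g c \<subseteq>\<^sub>m map_tree ?g T"
          using c(3) by (auto simp: map_le_def map_tree_def dom_def)
      qed
      then have "beta_fin ar I (map_tree ?g c) \<in> Bset ar I (map_tree ?g T)"
        by (auto simp: Bset_def)
      ultimately show "b \<le> y" using H order_trans by blast
    qed
  qed
  show ?thesis unfolding beta_Bset[of ar I "mu T"] beta_Bset[of ar I "map_tree ?g T"]
    by (rule lubA_cong[OF ub])
qed

lemma Bset_leaf:
  fixes ar :: "'f \<Rightarrow> nat" and I :: "'f \<Rightarrow> 'a::order_bot list \<Rightarrow> 'a" and a :: 'a
  shows "Bset ar I (leaf a) = {bot, a}"
proof -
  have "approx ar s (leaf a) \<longleftrightarrow> s = bot_tree \<or> s = leaf a" for s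
  proof
    assume h: "approx ar s (leaf a)"
    then have w: "wf_tree ar s" and l: "s \<subseteq>\<^sub>m leaf a" by (auto simp: approx_def)
    show "s = bot_tree \<or> s = leaf a"
    proof (cases "s []")
      case None then show ?thesis using wf_root_None[OF w] by blast
    next
      case (Some x)
      then have "s [] = Some (Var a)" using l by (auto simp: map_le_def dom_def leaf_def)
      then show ?thesis using wf_root_Var[OF w] by blast
    qed
  next
    assume "s = bot_tree \<or> s = leaf a"
    moreover have "dom (leaf a :: ('f, 'a) tree) = {[]}" by (auto simp: leaf_def split: if_splits)
    moreover have "wf_tree ar (bot_tree :: ('f, 'a) tree)" by (simp add: wf_tree_def bot_tree_def)
    ultimately show "approx ar s (leaf a)"
      by (auto simp: approx_def wf_leaf map_le_def bot_tree_def)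
  qed
  then have "Bset ar I (leaf a) = {beta_fin ar I bot_tree, beta_fin ar I (leaf a)}"
    by (auto simp: Bset_def)
  also have "\<dots> = {bot, a}"
  proof -
    have "beta_fin ar I bot_tree = bot" by (rule beta_fin_None) (simp add: bot_tree_def)
    moreover have "beta_fin ar I (leaf a) = a" by (rule beta_fin_Var) (simp add: leaf_def)
    ultimately show ?thesis by simp
  qed
  finally show ?thesis .
qed

theorem mainTheorem2:
  fixes ar :: "'f \<Rightarrow> nat"
    and I :: "'f \<Rightarrow> 'a::order_bot list \<Rightarrow> 'a"
    and \<Delta>1 :: "'a set \<Rightarrow> ('f, 'a) tree set"
    and \<Delta>2 :: "('f, 'a) tree set \<Rightarrow> ('f, ('f, 'a) tree) tree set"
  assumes "quasi_regular ar \<Delta>1 \<Delta>2"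
    and "delta_regular ar I \<Delta>1"
  shows "(\<forall>a. beta ar I (eta a) = a) \<and>
         (\<forall>T\<in>\<Delta>2 (\<Delta>1 UNIV). beta ar I (mu T) = beta ar I (map_tree (beta ar I) T))"
proof (intro conjI allI ballI)
  have QR: "qr_family ar \<Delta>1" and Q2: "qr_family ar \<Delta>2"
    using assms(1) by (auto simp: quasi_regular_def)
  fix a :: 'a
  have "is_lub_on (\<le>) UNIV {bot, a} a" by (auto simp: is_lub_on_def)
  then show "beta ar I (eta a) = a"
    unfolding beta_Bset eta_def Bset_leaf by (rule lub_unique)
next
  have QR: "qr_family ar \<Delta>1" and Q2: "qr_family ar \<Delta>2"
    using assms(1) by (auto simp: quasi_regular_def)
  fix T assume "T \<in> \<Delta>2 (\<Delta>1 UNIV)"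
  then have "T \<in> CT ar (\<Delta>1 UNIV)" using Q2 unfolding qr_family_def by blast
  then have wT: "wf_tree ar T" and lv: "\<forall>p s. T p = Some (Var s) \<longrightarrow> s \<in> \<Delta>1 UNIV"
    by (auto simp: CT_def)
  show "beta ar I (mu T) = beta ar I (map_tree (beta ar I) T)"
    by (rule main_eq[OF QR assms(2) wT lv])
qed


end
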